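(* Let $\mathbf d=(d_1,\ldots,d_n)$ be a degree sequence, $w\in[n]$, and let $V_w\subseteq[n]$ and $\mathbf d_{n,w}=(d_v)_{v\in V_w}$ be as described in the context. Let $\mathcal G_w$ be a random functional graph on vertex set $V_w$ with degree sequence $\mathbf d_{n,w}$, i.e. the graph of a uniformly random $f:V_w\to V_w$ with $|f^{-1}(\{v\})|=d_v$ for all $v\in V_w$. Then an $n$-extension of $\mathcal G_w$ is a random functional graph with degree sequence $\mathbf d$, i.e. it is distributed as the graph of a uniformly random element of $\mathfrak F(\mathbf d)$.
   Context: A degree sequence is $\mathbf d=(d_1,\ldots,d_n)\in\mathbb N_0^n$ with $\sum_j d_j=n$; $\mathfrak F(\mathbf d)=\{f:[n]\to[n]: |f^{-1}(\{i\})|=d_i\ \forall i\}$; the functional graph of $f:V\to V$ has vertex set $V$ and edges $(v,f(v))$. Let $\sigma^2=\frac1n\sum_j d_j^2-1$ and $\hat n=\lfloor (n\sigma^2)^{4/3}\rfloor$. If $\hat n\ge n$, $V_w=[n]$. Otherwise let $v_1,\ldots,v_{n-\hat n}$ be $n-\hat n$ distinct vertices in $[n]\setminus\{w\}$ with $d_{v_i}=1$, chosen by a fixed deterministic rule (such vertices exist), and $V_w=[n]\setminus\{v_1,\ldots,v_{n-\hat n}\}$. ($\sum_{v\in V_w}d_v=|V_w|$.) Given $V'\subseteq[n]$ and a functional graph $G=(V',E')$ on $V'$, an $n$-extension of $G$ is the random graph on $[n]$ produced as follows: start with $V_0=V'$, $E_0=E'$; while $V_i\ne[n]$, let $u$ be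 the smallest element of $[n]\setminus V_i$; with probability $1/(|E_i|+1)$ set $V_{i+1}=V_i\cup\{u\}$, $E_{i+1}=E_i\cup\{(u,u)\}$ (a loop); otherwise choose an edge $(x,y)\in E_i$ uniformly at random and set $V_{i+1}=V_i\cup\{u\}$, $E_{i+1}=(E_i\setminus\{(x,y)\})\cup\{(x,u),(u,y)\}$; all random choices independent. The output is $(V_i,E_i)$ once $V_i=[n]$. *)

theory Defs
  imports "HOL-Probability.Probability"
begin

text \<open>Vertices are natural numbers; [n] = {1..n}. A graph is a pair (vertex set, edge set),
  edges being ordered pairs (v, f v).\<close>

definition degF :: "nat set \<Rightarrow> (nat \<Rightarrow> nat) \<Rightarrow> (nat \<Rightarrow> nat) set" where
  "degF V d = {f. f \<in> V \<rightarrow>\<^sub>E V \<and> (\<forall>i\<in>V. card {v\<in>V. f v = i} = d i)}"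

definition fgraph :: "nat set \<Rightarrow> (nat \<Rightarrow> nat) \<Rightarrow> (nat \<times> nat) set" where
  "fgraph V f = {(v, f v) | v. v \<in> V}"

definition random_fg :: "nat set \<Rightarrow> (nat \<Rightarrow> nat) \<Rightarrow> (nat set \<times> (nat \<times> nat) set) pmf" where
  "random_fg V d = map_pmf (\<lambda>f. (V, fgraph V f)) (pmf_of_set (degF V d))"

definition ext_step :: "nat \<Rightarrow> nat set \<times> (nat \<times> nat) set \<Rightarrow> (nat set \<times> (nat \<times> nat) set) pmf" where
  "ext_step n s = (case s of (V, E) \<Rightarrow>
     if V = {1..n} then return_pmf (V, E)
     else (let u = Min ({1..n} - V) in
       bind_pmf (bernoulli_pmf (1 / real (card E + 1)))
         (\<lambda>b. if b then return_pmf (insert u V, insert (u, u) E)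
              else map_pmf (\<lambda>(x, y). (insert u V, (E - {(x, y)}) \<union> {(x, u), (u, y)}))
                     (pmf_of_set E))))"

text \<open>n-extension of the graph (V, E): iterate the step (at most n vertices are added,
  so n iterations reach vertex set [n]).\<close>
definition n_extension :: "nat \<Rightarrow> nat set \<times> (nat \<times> nat) set \<Rightarrow> (nat set \<times> (nat \<times> nat) set) pmf" where
  "n_extension n G = ((\<lambda>p. bind_pmf p (ext_step n)) ^^ n) (return_pmf G)"

definition sigma2 :: "nat \<Rightarrow> (nat \<Rightarrow> nat) \<Rightarrow> real" where
  "sigma2 n d = (1 / real n) * (\<Sum>j\<in>{1..n}. real (d j) ^ 2) - 1"

definition hat_n :: "nat \<Rightarrow> (nat \<Rightarrow> nat) \<Rightarrow> nat" where
  "hat_n n d = nat \<lfloor>(real n * sigma2 n d) powr (4 / 3)\<rfloor>"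

end

theory Submission
  imports Defs
begin

lemma bernoulli_one: "bernoulli_pmf 1 = return_pmf True"
  by (rule pmf_eqI) (auto simp: indicator_def)

lemma pmf_of_set_insert_bern:
  assumes "finite V" "V \<noteq> {}" "u \<notin> V"
  shows "pmf_of_set (insert u V) =
    bind_pmf (bernoulli_pmf (1 / real (card V + 1))) (\<lambda>b. if b then return_pmf u else pmf_of_set V)"
proof (rule pmf_eqI)
  fix x
  have c: "card V > 0" using assms by (simp add: card_gt_0_iff)
  have p: "0 \<le> 1 / real (card V + 1)" "1 / real (card V + 1) \<le> 1" by auto
  show "pmf (pmf_of_set (insert u V)) x = pmf (bind_pmf (bernoulli_pmf (1 / real (card V + 1))) (\<lambda>b. if b then return_pmf u else pmf_of_set V)) x"
    using assms c p
    by (cases "x = u"; cases "x \<in> V")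
       (auto simp: pmf_bind integral_bernoulli_pmf indicator_def field_simps)
qed

lemma pmf_of_set_times:
  assumes "finite A" "A \<noteq> {}" "finite B" "B \<noteq> {}"
  shows "pmf_of_set (A \<times> B) = pair_pmf (pmf_of_set A) (pmf_of_set B)"
proof (rule pmf_eqI)
  fix x :: "'a \<times> 'b"
  obtain a b where x: "x = (a,b)" by (cases x)
  show "pmf (pmf_of_set (A \<times> B)) x = pmf (pair_pmf (pmf_of_set A) (pmf_of_set B)) x"
    unfolding x pmf_pair using assms
    by (simp add: pmf_of_set card_cartesian_product indicator_def)
qed

lemma bind_map_pair:
  "bind_pmf A (\<lambda>g. map_pmf (H g) B) = map_pmf (\<lambda>(g,z). H g z) (pair_pmf A B)"
  by (simp add: pair_pmf_def map_bind_pmf map_pmf_def bind_assoc_pmf bind_return_pmf)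

lemma degF_exists:
  assumes "finite V" "(\<Sum>i\<in>V. d i) = card V"
  shows "degF V d \<noteq> {}"
proof -
  let ?S = "SIGMA i:V. {..<d i}"
  have "card ?S = card V" using assms by (simp add: card_SigmaI)
  moreover have "finite ?S" using assms(1) by blast
  ultimately obtain g where g: "bij_betw g V ?S"
    using assms(1) finite_same_card_bij by metis
  have ginj: "inj_on g V" using g by (simp add: bij_betw_def)
  have gs: "g v \<in> ?S" if "v \<in> V" for v by (rule bij_betw_apply[OF g that])
  have gsurj: "\<exists>v\<in>V. g v = p" if "p \<in> ?S" for p
  proof -
    have "p \<in> g ` V" using g that by (simp add: bij_betw_def)
    thus ?thesis by blast
  qed
  have fstV: "fst (g v) \<in> V" if "v \<in> V" for v
  proof -
    obtain a b where ab: "g v = (a,b)" by (cases "g v")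
    thus ?thesis using gs[OF that] by simp
  qed
  define f where "f = (\<lambda>v. if v \<in> V then fst (g v) else undefined)"
  have fPi: "f \<in> V \<rightarrow>\<^sub>E V" unfolding f_def using fstV by (simp add: PiE_def extensional_def Pi_def)
  have fdeg: "card {v\<in>V. f v = i} = d i" if i: "i \<in> V" for i
  proof -
    have "g ` {v\<in>V. f v = i} = {i} \<times> {..<d i}"
    proof (rule set_eqI, rule iffI)
      fix p assume "p \<in> g ` {v \<in> V. f v = i}"
      then obtain v where v: "v \<in> V" "f v = i" "p = g v" by blast
      obtain a b where ab: "g v = (a,b)" by (cases "g v")
      have "fst (g v) = i" using v by (simp add: f_def)
      thus "p \<in> {i} \<times> {..<d i}" using gs[OF v(1)] ab v(3) by simp
    next
      fix p assume p: "p \<in> {i} \<times> {..<d i}"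
      hence "p \<in> ?S" using i by blast
      then obtain v where v: "v \<in> V" "g v = p" using gsurj by blast
      have "f v = i" using v p by (simp add: f_def mem_Times_iff)
      thus "p \<in> g ` {v \<in> V. f v = i}" using v by blast
    qed
    moreover have "inj_on g {v\<in>V. f v = i}" using ginj by (rule inj_on_subset) blast
    ultimately have "card ({i} \<times> {..<d i}) = card {v\<in>V. f v = i}" by (metis card_image)
    thus ?thesis by simp
  qed
  have "f \<in> degF V d" unfolding degF_def using fPi fdeg by blast
  thus ?thesis by blast
qed

definition Hx :: "nat \<Rightarrow> (nat \<Rightarrow> nat) \<Rightarrow> nat \<Rightarrow> (nat \<Rightarrow> nat)" where
  "Hx u g z = (if z = u then g(u := u) else g(z := u, u := g z))"

lemma degF_memD:
  assumes "g \<in> degF V d"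
  shows "\<And>v. v \<in> V \<Longrightarrow> g v \<in> V" "\<And>v. v \<notin> V \<Longrightarrow> g v = undefined"
        "\<And>i. i \<in> V \<Longrightarrow> card {v\<in>V. g v = i} = d i"
  using assms unfolding degF_def by (auto simp: PiE_def extensional_def Pi_def)

lemma degF_memI:
  assumes "\<And>v. v \<in> V \<Longrightarrow> g v \<in> V" "\<And>v. v \<notin> V \<Longrightarrow> g v = undefined"
        "\<And>i. i \<in> V \<Longrightarrow> card {v\<in>V. g v = i} = d i"
  shows "g \<in> degF V d"
  using assms unfolding degF_def by (auto simp: PiE_def extensional_def Pi_def)

lemma H_in:
  assumes V: "finite V" "u \<notin> V" and g: "g \<in> degF V d" and z: "z \<in> insert u V" and du: "d u = 1"
  shows "Hx u g z \<in> degF (insert u V) d"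
proof (cases "z = u")
  case True
  have h: "Hx u g z = g(u := u)" using True by (simp add: Hx_def)
  note gd = degF_memD[OF g]
  show ?thesis unfolding h
  proof (rule degF_memI)
    fix i assume i: "i \<in> insert u V"
    show "card {v \<in> insert u V. (g(u := u)) v = i} = d i"
    proof (cases "i = u")
      case True
      have "{v \<in> insert u V. (g(u := u)) v = i} = {u}" using True gd(1) V by auto
      thus ?thesis using True du by simp
    next
      case False
      have "{v \<in> insert u V. (g(u := u)) v = i} = {v\<in>V. g v = i}" using False V by auto
      thus ?thesis using False i gd(3) by simp
    qed
  qed (use gd in auto)
next
  case False
  hence zV: "z \<in> V" using z by simp
  have h: "Hx u g z = g(z := u, u := g z)" using False by (simp add: Hx_def)
  note gd = degF_memD[OF g]
  have zz: "z \<noteq> u" using False .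
  show ?thesis unfolding h
  proof (rule degF_memI)
    fix i assume i: "i \<in> insert u V"
    show "card {v \<in> insert u V. (g(z := u, u := g z)) v = i} = d i"
    proof (cases "i = u")
      case True
      have "{v \<in> insert u V. (g(z := u, u := g z)) v = i} = {z}" using True gd(1) V zV zz by auto
      thus ?thesis using True du by simp
    next
      case False
      hence iV: "i \<in> V" using i by simp
      show ?thesis
      proof (cases "g z = i")
        case True
        have e: "{v \<in> insert u V. (g(z := u, u := g z)) v = i} = insert u ({v\<in>V. g v = i} - {z})"
          using True False zz V by auto
        have zin: "z \<in> {v\<in>V. g v = i}" using True zV by simp
        have "card {v\<in>V. g v = i} > 0" using zin V(1) by (auto simp: card_gt_0_iff)
        hence "card ({v\<in>V. g v = i} - {z}) = d i - 1" "d i \<ge> 1"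
          using gd(3)[OF iV] V(1) zin by (auto simp: card_Diff_singleton)
        thus ?thesis unfolding e using V by (simp add: card_insert_if)
      next
        case False2: False
        have e: "{v \<in> insert u V. (g(z := u, u := g z)) v = i} = {v\<in>V. g v = i}"
          using False2 False zz V by auto
        thus ?thesis using gd(3)[OF iV] by simp
      qed
    qed
  qed (use gd zV in auto)
qed


lemma H_pre:
  assumes V: "u \<notin> V" and g: "g \<in> degF V d" and z: "z \<in> insert u V" and v: "v \<in> insert u V"
  shows "Hx u g z v = u \<longleftrightarrow> v = z"
proof -
  have gV: "\<And>x. x \<in> V \<Longrightarrow> g x \<noteq> u" using degF_memD(1)[OF g] V by blast
  show ?thesis
  proof (cases "z = u")
    case True
    thus ?thesis using gV v unfolding Hx_def by (cases "v = u") simp_all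
  next
    case False
    hence zV: "z \<in> V" using z by simp
    show ?thesis
    proof (cases "v = u")
      case True thus ?thesis using False gV[OF zV] unfolding Hx_def by simp
    next
      case vu: False
      hence "v \<in> V" using v by simp
      thus ?thesis using False vu gV unfolding Hx_def by (cases "v = z") simp_all
    qed
  qed
qed

lemma H_other: "v \<noteq> z \<Longrightarrow> v \<noteq> u \<Longrightarrow> Hx u g z v = g v"
  unfolding Hx_def by simp

lemma H_u: "z \<noteq> u \<Longrightarrow> Hx u g z u = g z"
  unfolding Hx_def by simp

lemma H_inj_aux:
  assumes V: "u \<notin> V"
  and g: "g \<in> degF V d" and z: "z \<in> insert u V" and g': "g' \<in> degF V d" and z': "z' \<in> insert u V"
    and e: "Hx u g z = Hx u g' z'"
  shows "g = g' \<and> z = z'"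
proof -
  have "Hx u g z z = u" using H_pre[OF V g z z] by simp
  hence "Hx u g' z' z = u" using e by simp
  hence zz: "z = z'" using H_pre[OF V g' z' z] by simp
  have e2: "Hx u g z v = Hx u g' z v" for v using e zz by simp
  have "g v = g' v" for v
  proof (cases "v \<in> V")
    case False thus ?thesis using degF_memD(2)[OF g] degF_memD(2)[OF g'] by simp
  next
    case True
    hence vu: "v \<noteq> u" using V by auto
    show ?thesis
    proof (cases "v = z")
      case True
      hence zu: "z \<noteq> u" using vu by simp
      have "g z = g' z" using e2[of u] H_u[OF zu, of g] H_u[OF zu, of g'] by simp
      thus ?thesis using True by simp
    next
      case False
      thus ?thesis using e2[of v] H_other[OF False vu, of g] H_other[OF False vu, of g'] by simp
    qed
  qed
  hence "g = g'" by (rule ext)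
  thus ?thesis using zz by simp
qed

lemma H_inj:
  assumes V: "u \<notin> V"
  shows "inj_on (\<lambda>(g, z). Hx u g z) (degF V d \<times> insert u V)"
proof (rule inj_onI)
  fix p q assume p: "p \<in> degF V d \<times> insert u V" and q: "q \<in> degF V d \<times> insert u V"
    and e: "(\<lambda>(g, z). Hx u g z) p = (\<lambda>(g, z). Hx u g z) q"
  obtain g z where pg: "p = (g, z)" by (cases p)
  obtain g' z' where qg: "q = (g', z')" by (cases q)
  have "g = g' \<and> z = z'"
    by (rule H_inj_aux[where d=d, OF V]) (use p q e pg qg in simp_all)
  thus "p = q" using pg qg by simp
qed

lemma H_surj:
  assumes V: "finite V" "u \<notin> V" and f: "f \<in> degF (insert u V) d" and du: "d u = 1"
  shows "\<exists>g\<in>degF V d. \<exists>z\<in>insert u V. f = Hx u g z"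
proof -
  note fd = degF_memD[OF f]
  have "card {v\<in>insert u V. f v = u} = 1" using fd(3)[of u] du by simp
  then obtain z where zs: "{v\<in>insert u V. f v = u} = {z}" by (rule card_1_singletonE)
  hence z: "z \<in> insert u V" "f z = u" by auto
  have pre: "\<And>v. v \<in> insert u V \<Longrightarrow> f v = u \<Longrightarrow> v = z" using zs by auto
  show ?thesis
  proof (cases "z = u")
    case True
    define g where "g = f(u := undefined)"
    have "g \<in> degF V d"
    proof (rule degF_memI)
      fix v assume v: "v \<in> V"
      have "f v \<noteq> u"
      proof
        assume "f v = u" hence "v = z" using pre v by auto
        thus False using True v V by auto
      qed
      thus "g v \<in> V" using fd(1)[of v] v V unfolding g_def by auto
    next
      fix v assume "v \<notin> V" thus "g v = undefined" using fd(2) unfolding g_def by auto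
    next
      fix i assume i: "i \<in> V"
      have "{v\<in>V. g v = i} = {v\<in>insert u V. f v = i}" using i V z True unfolding g_def by auto
      thus "card {v\<in>V. g v = i} = d i" using fd(3)[of i] i by simp
    qed
    moreover have "f = Hx u g u" unfolding Hx_def g_def using z True by (auto simp: fun_eq_iff)
    ultimately show ?thesis using True z by blast
  next
    case False
    hence zV: "z \<in> V" using z by simp
    have fu: "f u \<noteq> u" using pre False by auto
    hence fuV: "f u \<in> V" using fd(1)[of u] by simp
    define g where "g = f(z := f u, u := undefined)"
    have "g \<in> degF V d"
    proof (rule degF_memI)
      fix v assume v: "v \<in> V"
      show "g v \<in> V"
      proof (cases "v = z")
        case True thus ?thesis using fuV V v unfolding g_def by auto
      next
        case False
        hence "f v \<noteq> u" using pre v by auto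
        thus ?thesis using fd(1)[of v] v V False unfolding g_def by auto
      qed
    next
      fix v assume "v \<notin> V" thus "g v = undefined" using fd(2) zV unfolding g_def by auto
    next
      fix i assume i: "i \<in> V"
      hence iu: "i \<noteq> u" using V by auto
      show "card {v\<in>V. g v = i} = d i"
      proof (cases "f u = i")
        case True
        have e: "{v\<in>V. g v = i} = insert z ({v\<in>insert u V. f v = i} - {u})"
          using True zV iu z V False unfolding g_def by auto
        have uin: "u \<in> {v\<in>insert u V. f v = i}" using True by simp
        have zn: "z \<notin> {v\<in>insert u V. f v = i} - {u}" using z iu by auto
        have "card ({v\<in>insert u V. f v = i} - {u}) = d i - 1"
          using fd(3)[of i] i uin V(1) by (auto simp: card_Diff_singleton)
        moreover have "card {v\<in>insert u V. f v = i} > 0" using uin V(1) by (auto simp: card_gt_0_iff)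
        ultimately show ?thesis unfolding e using V(1) zn fd(3)[of i] i by (simp add: card_insert_if)
      next
        case False2: False
        have e: "{v\<in>V. g v = i} = {v\<in>insert u V. f v = i}"
          using False2 zV iu z V False unfolding g_def by auto
        thus ?thesis using fd(3)[of i] i by simp
      qed
    qed
    moreover have "f = Hx u g z" unfolding Hx_def g_def using z False by (auto simp: fun_eq_iff)
    ultimately show ?thesis using z by blast
  qed
qed

lemma H_image:
  assumes V: "finite V" "u \<notin> V" and du: "d u = 1"
  shows "(\<lambda>(g, z). Hx u g z) ` (degF V d \<times> insert u V) = degF (insert u V) d"
proof
  show "(\<lambda>(g, z). Hx u g z) ` (degF V d \<times> insert u V) \<subseteq> degF (insert u V) d"
    using H_in[where u=u and V=V and d=d, OF V(1) V(2) _ _ du] by auto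
  show "degF (insert u V) d \<subseteq> (\<lambda>(g, z). Hx u g z) ` (degF V d \<times> insert u V)"
  proof
    fix f assume "f \<in> degF (insert u V) d"
    then obtain g z where "g \<in> degF V d" "z \<in> insert u V" "f = Hx u g z"
      using H_surj[where u=u and V=V and d=d, OF V(1) V(2) _ du] by blast
    thus "f \<in> (\<lambda>(g, z). Hx u g z) ` (degF V d \<times> insert u V)"
      by (intro image_eqI[of _ _ "(g,z)"]) auto
  qed
qed


lemma fgraph_img: "fgraph V f = (\<lambda>v. (v, f v)) ` V"
  unfolding fgraph_def by auto

lemma card_fgraph: "finite V \<Longrightarrow> card (fgraph V f) = card V"
  unfolding fgraph_img by (rule card_image) (auto simp: inj_on_def)

lemma ext_step_g:
  assumes V: "finite V" "V \<subseteq> {1..n}" "u \<in> {1..n}" "u \<notin> V" "Min ({1..n} - V) = u"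
  shows "ext_step n (V, fgraph V g) =
    map_pmf (\<lambda>z. (insert u V, fgraph (insert u V) (Hx u g z))) (pmf_of_set (insert u V))"
proof -
  have nV: "V \<noteq> {1..n}" using V by auto
  have loop: "insert (u,u) (fgraph V g) = fgraph (insert u V) (Hx u g u)"
    unfolding fgraph_def Hx_def using V(4) by auto
  have edge: "(fgraph V g - {(v, g v)}) \<union> {(v,u),(u,g v)} = fgraph (insert u V) (Hx u g v)"
    if v: "v \<in> V" for v
  proof -
    have vu: "v \<noteq> u" using v V(4) by auto
    show ?thesis unfolding fgraph_def Hx_def using vu V(4) v by auto
  qed
  have e0: "ext_step n (V, fgraph V g) =
     bind_pmf (bernoulli_pmf (1 / real (card V + 1)))
         (\<lambda>b. if b then return_pmf (insert u V, insert (u, u) (fgraph V g))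
              else map_pmf (\<lambda>(x, y). (insert u V, (fgraph V g - {(x, y)}) \<union> {(x, u), (u, y)}))
                     (pmf_of_set (fgraph V g)))"
    unfolding ext_step_def using nV V(5) by (simp add: Let_def card_fgraph[OF V(1)])
  show ?thesis
  proof (cases "V = {}")
    case True
    show ?thesis using loop unfolding e0
      by (simp add: True bernoulli_one bind_return_pmf pmf_of_set_singleton)
  next
    case False
    have pe: "pmf_of_set (fgraph V g) = map_pmf (\<lambda>v. (v, g v)) (pmf_of_set V)"
      unfolding fgraph_img using False V(1)
      by (subst map_pmf_of_set_inj) (auto simp: inj_on_def)
    show ?thesis
      unfolding e0 pmf_of_set_insert_bern[OF V(1) False V(4)] map_bind_pmf
    proof (rule bind_pmf_cong[OF refl])
      fix b
      show "(if b then return_pmf (insert u V, insert (u, u) (fgraph V g))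
              else map_pmf (\<lambda>(x, y). (insert u V, (fgraph V g - {(x, y)}) \<union> {(x, u), (u, y)}))
                     (pmf_of_set (fgraph V g))) =
            map_pmf (\<lambda>z. (insert u V, fgraph (insert u V) (Hx u g z)))
              (if b then return_pmf u else pmf_of_set V)"
      proof (cases b)
        case True thus ?thesis using loop by simp
      next
        case False2: False
        have "map_pmf (\<lambda>(x, y). (insert u V, (fgraph V g - {(x, y)}) \<union> {(x, u), (u, y)}))
                     (pmf_of_set (fgraph V g)) =
              map_pmf (\<lambda>z. (insert u V, fgraph (insert u V) (Hx u g z))) (pmf_of_set V)"
          unfolding pe map_pmf_comp
          by (rule map_pmf_cong[OF refl]) (use edge False V(1) in \<open>auto simp: set_pmf_of_set\<close>)
        thus ?thesis using False2 by simp
      qed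
    qed
  qed
qed

lemma step:
  assumes V: "finite V" "V \<subseteq> {1..n}" "u \<in> {1..n}" "u \<notin> V" "Min ({1..n} - V) = u"
    and du: "d u = 1" and ne: "degF V d \<noteq> {}"
  shows "bind_pmf (random_fg V d) (ext_step n) = random_fg (insert u V) d"
proof -
  let ?A = "degF V d" and ?U = "insert u V"
  let ?G = "\<lambda>f. (insert u V, fgraph (insert u V) f)"
  have fA: "finite ?A"
  proof (rule finite_subset)
    show "?A \<subseteq> V \<rightarrow>\<^sub>E V" unfolding degF_def by auto
    show "finite (V \<rightarrow>\<^sub>E V)" using V(1) by (simp add: finite_PiE)
  qed
  have "bind_pmf (random_fg V d) (ext_step n) =
        bind_pmf (pmf_of_set ?A) (\<lambda>g. map_pmf (\<lambda>z. ?G (Hx u g z)) (pmf_of_set ?U))"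
    unfolding random_fg_def bind_map_pmf using ext_step_g[OF V] by simp
  also have "\<dots> = map_pmf (\<lambda>(g, z). ?G (Hx u g z)) (pair_pmf (pmf_of_set ?A) (pmf_of_set ?U))"
    by (rule bind_map_pair)
  also have "\<dots> = map_pmf (\<lambda>(g, z). ?G (Hx u g z)) (pmf_of_set (?A \<times> ?U))"
    using fA ne V(1) by (simp add: pmf_of_set_times)
  also have "\<dots> = map_pmf ?G (map_pmf (\<lambda>(g, z). Hx u g z) (pmf_of_set (?A \<times> ?U)))"
    unfolding map_pmf_comp by (rule map_pmf_cong) auto
  also have "map_pmf (\<lambda>(g, z). Hx u g z) (pmf_of_set (?A \<times> ?U)) = pmf_of_set (degF ?U d)"
    using map_pmf_of_set_inj[OF H_inj[where d=d, OF V(4)]] H_image[where d=d and u=u, OF V(1) V(4) du] fA ne V(1) by simp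
  finally show ?thesis unfolding random_fg_def .
qed


lemma iter_bind:
  "bind_pmf R (\<lambda>G. ((\<lambda>p. bind_pmf p (ext_step n)) ^^ k) (return_pmf G))
   = ((\<lambda>p. bind_pmf p (ext_step n)) ^^ k) R"
proof (induction k)
  case 0 thus ?case by (simp add: bind_return_pmf')
next
  case (Suc k)
  have "bind_pmf R (\<lambda>G. ((\<lambda>p. bind_pmf p (ext_step n)) ^^ Suc k) (return_pmf G))
      = bind_pmf (bind_pmf R (\<lambda>G. ((\<lambda>p. bind_pmf p (ext_step n)) ^^ k) (return_pmf G))) (ext_step n)"
    by (simp add: bind_assoc_pmf)
  thus ?case using Suc by simp
qed

lemma fixed_full:
  "bind_pmf (random_fg {1..n} d) (ext_step n) = random_fg {1..n} d"
  unfolding random_fg_def bind_map_pmf ext_step_def by (simp add: map_pmf_def)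

lemma converge:
  assumes sum: "(\<Sum>j\<in>{1..n}. d j) = n" and S1: "\<forall>v\<in>S. d v = 1"
  shows "{1..n} - S \<subseteq> V \<Longrightarrow> V \<subseteq> {1..n} \<Longrightarrow> card ({1..n} - V) \<le> k \<Longrightarrow>
    ((\<lambda>p. bind_pmf p (ext_step n)) ^^ k) (random_fg V d) = random_fg {1..n} d"
proof (induction k arbitrary: V)
  case 0
  hence "{1..n} - V = {}" by simp
  hence "V = {1..n}" using 0 by auto
  thus ?case by simp
next
  case (Suc k)
  let ?F = "\<lambda>p. bind_pmf p (ext_step n)"
  have fV: "finite V" using Suc.prems(2) finite_subset by blast
  show ?case
  proof (cases "V = {1..n}")
    case True
    have "(?F ^^ Suc k) (random_fg V d) = (?F ^^ k) (?F (random_fg V d))"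
      by (simp add: funpow_Suc_right del: funpow.simps)
    also have "?F (random_fg V d) = random_fg V d" using True fixed_full by simp
    also have "(?F ^^ k) (random_fg V d) = random_fg {1..n} d"
      using Suc.IH[of V] Suc.prems True by simp
    finally show ?thesis .
  next
    case False
    define u where "u = Min ({1..n} - V)"
    have ne: "{1..n} - V \<noteq> {}" using False Suc.prems(2) by auto
    have uin: "u \<in> {1..n} - V" unfolding u_def using ne by (intro Min_in) auto
    hence uS: "u \<in> S" using Suc.prems(1) by auto
    hence du: "d u = 1" using S1 by simp
    have "(\<Sum>j\<in>{1..n}. d j) = (\<Sum>j\<in>V. d j) + (\<Sum>j\<in>{1..n} - V. d j)"
      using Suc.prems(2) by (metis add.commute finite_atLeastAtMost sum.subset_diff)
    moreover have "(\<Sum>j\<in>{1..n} - V. d j) = card ({1..n} - V)"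
    proof -
      have "(\<Sum>j\<in>{1..n} - V. d j) = (\<Sum>j\<in>{1..n} - V. 1)"
        using Suc.prems(1) S1 by (intro sum.cong) auto
      thus ?thesis by simp
    qed
    moreover have "card ({1..n} - V) + card V = n"
      using Suc.prems(2) fV by (metis card_Diff_subset card_atLeastAtMost diff_Suc_1 card_mono
          finite_atLeastAtMost le_add_diff_inverse2)
    ultimately have sV: "(\<Sum>j\<in>V. d j) = card V" using sum by simp
    have dne: "degF V d \<noteq> {}" by (rule degF_exists[OF fV sV])
    have "(?F ^^ Suc k) (random_fg V d) = (?F ^^ k) (?F (random_fg V d))"
      by (simp add: funpow_Suc_right del: funpow.simps)
    also have "?F (random_fg V d) = random_fg (insert u V) d"
      by (rule step[OF fV Suc.prems(2) _ _ u_def[symmetric] du dne]) (use uin in auto)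
    also have "(?F ^^ k) (random_fg (insert u V) d) = random_fg {1..n} d"
    proof (rule Suc.IH)
      show "{1..n} - S \<subseteq> insert u V" using Suc.prems(1) by auto
      show "insert u V \<subseteq> {1..n}" using Suc.prems(2) uin by auto
      have "{1..n} - insert u V = ({1..n} - V) - {u}" by auto
      hence "card ({1..n} - insert u V) = card ({1..n} - V) - 1" using uin by simp
      thus "card ({1..n} - insert u V) \<le> k" using Suc.prems(3) by simp
    qed
    finally show ?thesis .
  qed
qed

theorem lemma4p5:
  fixes n w :: nat and d :: "nat \<Rightarrow> nat" and S :: "nat set"
  assumes "(\<Sum>j\<in>{1..n}. d j) = n"
    and "w \<in> {1..n}"
    and "S \<subseteq> {1..n} - {w}"
    and "\<forall>v\<in>S. d v = 1"
    and "if hat_n n d \<ge> n then S = {} else card S = n - hat_n n d"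
  shows "bind_pmf (random_fg ({1..n} - S) d) (n_extension n) = random_fg {1..n} d"
proof -
  have "bind_pmf (random_fg ({1..n} - S) d) (n_extension n) =
     ((\<lambda>p. bind_pmf p (ext_step n)) ^^ n) (random_fg ({1..n} - S) d)"
    unfolding n_extension_def by (rule iter_bind)
  also have "\<dots> = random_fg {1..n} d"
  proof (rule converge[OF assms(1) assms(4)])
    have "{1..n} - ({1..n} - S) = S" using assms(3) by auto
    moreover have "card S \<le> n" using assms(3) card_mono[of "{1..n}" S] by auto
    ultimately show "card ({1..n} - ({1..n} - S)) \<le> n" by simp
  qed auto
  finally show ?thesis .
qed

end
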